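(* Consider the mixture of regressions model with $\sigma=1$. There exist universal constants $\eta_0>0$ and $\gamma\in[0,1/4)$ such that if $\|\theta^*\|_2\ge\eta_0$ and $\|\theta-\theta^*\|_2\le\|\theta^*\|_2/32$, then for each $u\in[0,1]$, with $\theta_u=\theta^*+u(\theta-\theta^* )$ and $W_u=Y\langle X,\theta_u\rangle$, $$\sqrt{\mathbb{E}\Big[\frac{Y^2\langle X,\theta_u\rangle^2}{(e^{W_u}+e^{-W_u})^4}\Big]}\le\frac{\gamma}{14},$$ and, whenever in addition $\|\theta-\theta^*\|_2\le1$, $$\sqrt{\mathbb{E}\Big[\frac{Y^2}{(e^{W_u}+e^{-W_u})^4}\Big]}\le\frac{\gamma}{32}.$$
   Context: Mixture of regressions with $\sigma=1$: $X\sim N(0,I_d)$, $\varepsilon\sim N(0,1)$, $B$ a uniform random sign in $\{-1,+1\}$, mutually independent; $Y=B\langle X,\theta^*\rangle+\varepsilon$. *)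

theory Defs
  imports "HOL-Probability.Probability"
begin

(* Vectors in R^d are represented as functions nat => real; only the coordinates i < d matter. *)

definition ip :: "nat \<Rightarrow> (nat \<Rightarrow> real) \<Rightarrow> (nat \<Rightarrow> real) \<Rightarrow> real" where
  "ip d x y = (\<Sum>i<d. x i * y i)"

definition enorm :: "nat \<Rightarrow> (nat \<Rightarrow> real) \<Rightarrow> real" where
  "enorm d x = sqrt (\<Sum>i<d. (x i)\<^sup>2)"

definition gauss1 :: "real measure" where
  "gauss1 = density lborel std_normal_density"

definition gauss_vec :: "nat \<Rightarrow> (nat \<Rightarrow> real) measure" where
  "gauss_vec d = PiM {..<d} (\<lambda>_. gauss1)"

definition mor_model :: "nat \<Rightarrow> (((nat \<Rightarrow> real) \<times> real) \<times> real) measure" where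
  "mor_model d = (gauss_vec d \<Otimes>\<^sub>M gauss1) \<Otimes>\<^sub>M measure_pmf (pmf_of_set {-1, 1})"

definition resp :: "nat \<Rightarrow> (nat \<Rightarrow> real) \<Rightarrow> ((nat \<Rightarrow> real) \<times> real) \<times> real \<Rightarrow> real" where
  "resp d ths \<omega> = (case \<omega> of ((X, eps), B) \<Rightarrow> B * ip d X ths + eps)"

end

theory Submission
  imports Defs
begin

lemma ps_g1: "prob_space gauss1" unfolding gauss1_def by (rule prob_space_normal_density) simp
lemma ps_G: "prob_space (gauss_vec d)" unfolding gauss_vec_def
  by (rule prob_space_PiM) (simp add: ps_g1)
lemma sets_g1[simp]: "sets gauss1 = sets borel" by (simp add: gauss1_def)
lemma space_g1[simp]: "space gauss1 = UNIV" by (simp add: gauss1_def)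

lemma distr_pair_snd':
  assumes "prob_space A" "prob_space B"
  shows "distr (A \<Otimes>\<^sub>M B) B snd = B"
proof (intro measure_eqI)
  fix S assume S: "S \<in> sets (distr (A \<Otimes>\<^sub>M B) B snd)"
  then have "emeasure (distr (A \<Otimes>\<^sub>M B) B snd) S = emeasure (A \<Otimes>\<^sub>M B) (space A \<times> S)"
    by (auto simp add: emeasure_distr space_pair_measure dest: sets.sets_into_space intro!: arg_cong2[where f=emeasure])
  with S assms show "emeasure (distr (A \<Otimes>\<^sub>M B) B snd) S = emeasure B S"
    by (simp add: prob_space.emeasure_space_1 sigma_finite_measure.emeasure_pair_measure_Times prob_space_imp_sigma_finite)
qed simp



lemma distr_coord: "i < d \<Longrightarrow> distr (gauss_vec d) lborel (\<lambda>x. x i) = gauss1"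
proof -
  assume i: "i < d"
  have "distr (gauss_vec d) lborel (\<lambda>x. x i) = distr (gauss_vec d) gauss1 (\<lambda>x. x i)"
    by (rule distr_cong) auto
  also have "\<dots> = gauss1" unfolding gauss_vec_def
    by (rule distr_PiM_component) (use i ps_g1 in auto)
  finally show ?thesis .
qed

lemma meas_coord: "i < d \<Longrightarrow> (\<lambda>x. x i) \<in> borel_measurable (gauss_vec d)"
proof -
  assume "i < d"
  then have "(\<lambda>x. x i) \<in> measurable (gauss_vec d) gauss1" by (simp add: gauss_vec_def)
  then show ?thesis using measurable_cong_sets[OF refl sets_g1] by metis
qed

lemma coord_distributed: "i < d \<Longrightarrow> distributed (gauss_vec d) lborel (\<lambda>x. x i) std_normal_density"
  unfolding distributed_def
  using distr_coord[of i d] meas_coord[of i d] by (auto simp: gauss1_def)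

lemma indep_coords:
  assumes "0 < d"
  shows "prob_space.indep_vars (gauss_vec d) (\<lambda>_. borel) (\<lambda>i x. x i) {..<d}"
proof -
  interpret prob_space "gauss_vec d" by (rule ps_G)
  have rv: "\<And>i. i \<in> {..<d} \<Longrightarrow> random_variable borel (\<lambda>x. x i)"
    by (simp add: meas_coord)
  have l: "distr (gauss_vec d) (\<Pi>\<^sub>M i\<in>{..<d}. borel) (\<lambda>x. \<lambda>i\<in>{..<d}. x i) = gauss_vec d"
  proof -
    have "distr (gauss_vec d) (\<Pi>\<^sub>M i\<in>{..<d}. borel) (\<lambda>x. \<lambda>i\<in>{..<d}. x i)
        = distr (gauss_vec d) (gauss_vec d) (\<lambda>x. x)"
      by (rule distr_cong) (auto simp: gauss_vec_def space_PiM intro!: sets_PiM_cong)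
    also have "\<dots> = gauss_vec d" by simp
    finally show ?thesis .
  qed
  have r: "(\<Pi>\<^sub>M i\<in>{..<d}. distr (gauss_vec d) borel (\<lambda>x. x i)) = gauss_vec d"
  proof -
    have "(\<Pi>\<^sub>M i\<in>{..<d}. distr (gauss_vec d) borel (\<lambda>x. x i)) = (\<Pi>\<^sub>M i\<in>{..<d}. gauss1)"
    proof (rule PiM_cong)
      fix i assume "i \<in> {..<d}"
      then have "distr (gauss_vec d) borel (\<lambda>x. x i) = distr (gauss_vec d) lborel (\<lambda>x. x i)"
        by (intro distr_cong) auto
      then show "distr (gauss_vec d) borel (\<lambda>x. x i) = gauss1" using \<open>i \<in> {..<d}\<close> distr_coord by simp
    qed simp
    then show ?thesis by (simp add: gauss_vec_def)
  qed
  show ?thesis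
    by (subst indep_vars_iff_distr_eq_PiM') (use assms rv l r in auto)
qed



lemma enorm_pos_ex: "0 < enorm d v \<Longrightarrow> \<exists>i<d. v i \<noteq> 0"
  unfolding enorm_def by (rule ccontr) auto

lemma lin_distr:
  assumes pos: "0 < enorm d v"
  shows "distributed (gauss_vec d) lborel (\<lambda>x. ip d x v) (normal_density 0 (enorm d v))"
proof -
  interpret prob_space "gauss_vec d" by (rule ps_G)
  define I where "I = {i\<in>{..<d}. v i \<noteq> 0}"
  obtain j where j: "j < d" "v j \<noteq> 0" using enorm_pos_ex[OF pos] by blast
  then have Ine: "I \<noteq> {}" and fin: "finite I" and d0: "0 < d" unfolding I_def by auto
  have ind: "indep_vars (\<lambda>_. borel) (\<lambda>i x. x i * v i) I"
    using indep_vars_subset[OF indep_vars_compose2[OF indep_coords[OF d0], of "\<lambda>i y. y * v i" "\<lambda>_. borel"]]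
    unfolding I_def by (simp add: subset_eq)
  have nd: "distributed (gauss_vec d) lborel (\<lambda>x. x i * v i) (normal_density 0 \<bar>v i\<bar>)" if "i \<in> I" for i
  proof -
    have "distributed (gauss_vec d) lborel (\<lambda>x. 0 + v i * x i) (normal_density (0 + v i * 0) (\<bar>v i\<bar> * 1))"
      by (rule normal_density_affine[OF coord_distributed]) (use that in \<open>auto simp: I_def\<close>)
    then show ?thesis by (simp add: mult.commute)
  qed
  have "distributed (gauss_vec d) lborel (\<lambda>x. \<Sum>i\<in>I. x i * v i)
         (normal_density (\<Sum>i\<in>I. 0) (sqrt (\<Sum>i\<in>I. \<bar>v i\<bar>\<^sup>2)))"
    by (rule sum_indep_normal[OF fin Ine ind]) (use nd in \<open>auto simp: I_def\<close>)
  moreover have "\<And>x. (\<Sum>i\<in>I. x i * v i) = ip d x v"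
    unfolding ip_def I_def by (rule sum.mono_neutral_left) auto
  moreover have "(\<Sum>i\<in>I. \<bar>v i\<bar>\<^sup>2) = (\<Sum>i<d. (v i)\<^sup>2)"
    unfolding I_def power2_abs by (rule sum.mono_neutral_left) auto
  ultimately show ?thesis by (simp add: enorm_def)
qed



abbreviation "PB \<equiv> measure_pmf (pmf_of_set {-1, 1::real})"

lemma ps_GN: "prob_space (gauss_vec d \<Otimes>\<^sub>M gauss1)"
  by (intro prob_space_pair ps_G ps_g1)

lemma ps_M: "prob_space (mor_model d)"
  unfolding mor_model_def by (intro prob_space_pair ps_GN) (simp add: measure_pmf.prob_space_axioms)

lemma distr_MX: "distr (mor_model d) (gauss_vec d) (\<lambda>\<omega>. fst (fst \<omega>)) = gauss_vec d"
proof -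
  have "distr (mor_model d) (gauss_vec d) (\<lambda>\<omega>. fst (fst \<omega>))
      = distr (distr (mor_model d) (gauss_vec d \<Otimes>\<^sub>M gauss1) fst) (gauss_vec d) fst"
    by (subst distr_distr) (auto simp: mor_model_def comp_def)
  also have "distr (mor_model d) (gauss_vec d \<Otimes>\<^sub>M gauss1) fst = gauss_vec d \<Otimes>\<^sub>M gauss1"
    unfolding mor_model_def by (rule prob_space.distr_pair_fst) (simp add: measure_pmf.prob_space_axioms)
  also have "distr (gauss_vec d \<Otimes>\<^sub>M gauss1) (gauss_vec d) fst = gauss_vec d"
    by (rule prob_space.distr_pair_fst[OF ps_g1])
  finally show ?thesis .
qed

lemma distr_Me: "distr (mor_model d) gauss1 (\<lambda>\<omega>. snd (fst \<omega>)) = gauss1"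
proof -
  have "distr (mor_model d) gauss1 (\<lambda>\<omega>. snd (fst \<omega>))
      = distr (distr (mor_model d) (gauss_vec d \<Otimes>\<^sub>M gauss1) fst) gauss1 snd"
    by (subst distr_distr) (auto simp: mor_model_def comp_def)
  also have "distr (mor_model d) (gauss_vec d \<Otimes>\<^sub>M gauss1) fst = gauss_vec d \<Otimes>\<^sub>M gauss1"
    unfolding mor_model_def by (rule prob_space.distr_pair_fst) (simp add: measure_pmf.prob_space_axioms)
  also have "distr (gauss_vec d \<Otimes>\<^sub>M gauss1) gauss1 snd = gauss1"
    by (rule distr_pair_snd'[OF ps_G ps_g1])
  finally show ?thesis .
qed

lemma meas_MX: "(\<lambda>\<omega>. fst (fst \<omega>)) \<in> measurable (mor_model d) (gauss_vec d)"
  by (simp add: mor_model_def)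
lemma meas_Me: "(\<lambda>\<omega>. snd (fst \<omega>)) \<in> measurable (mor_model d) gauss1"
  by (simp add: mor_model_def)

lemma int_MX:
  fixes f :: "_ \<Rightarrow> real"
  assumes "f \<in> borel_measurable (gauss_vec d)"
  shows "(\<integral>\<omega>. f (fst (fst \<omega>)) \<partial>mor_model d) = (\<integral>x. f x \<partial>gauss_vec d)"
    and "integrable (mor_model d) (\<lambda>\<omega>. f (fst (fst \<omega>))) \<longleftrightarrow> integrable (gauss_vec d) f"
  using integral_distr[OF meas_MX assms] integrable_distr_eq[OF meas_MX assms] distr_MX by auto

lemma int_Me:
  fixes f :: "real \<Rightarrow> real"
  assumes "f \<in> borel_measurable borel"
  shows "(\<integral>\<omega>. f (snd (fst \<omega>)) \<partial>mor_model d) = (\<integral>x. f x \<partial>gauss1)"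
    and "integrable (mor_model d) (\<lambda>\<omega>. f (snd (fst \<omega>))) \<longleftrightarrow> integrable gauss1 f"
proof -
  have f: "f \<in> borel_measurable gauss1" using assms measurable_cong_sets[OF sets_g1 refl] by metis
  show "(\<integral>\<omega>. f (snd (fst \<omega>)) \<partial>mor_model d) = (\<integral>x. f x \<partial>gauss1)"
       "integrable (mor_model d) (\<lambda>\<omega>. f (snd (fst \<omega>))) \<longleftrightarrow> integrable gauss1 f"
  using integral_distr[OF meas_Me f] integrable_distr_eq[OF meas_Me f] distr_Me by auto
qed

lemma AE_B: "AE \<omega> in mor_model d. snd \<omega> \<in> {-1, 1}"
proof -
  interpret pair_sigma_finite "gauss_vec d \<Otimes>\<^sub>M gauss1" PB
    by (intro pair_sigma_finite.intro prob_space_imp_sigma_finite ps_GN measure_pmf.prob_space_axioms)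
  have "AE x in gauss_vec d \<Otimes>\<^sub>M gauss1. AE y in PB. snd (x, y) \<in> {-1, 1}"
    by (simp add: AE_measure_pmf_iff)
  then show ?thesis unfolding mor_model_def
    by (intro AE_pair_measure) auto
qed



lemma nd_le: "0 < \<sigma> \<Longrightarrow> normal_density 0 \<sigma> t \<le> 1 / (2 * \<sigma>)"
proof -
  assume s: "0 < \<sigma>"
  have e: "exp (-(t - 0)\<^sup>2 / (2 * \<sigma>\<^sup>2)) \<le> 1" by simp
  have q: "2 * \<sigma> \<le> sqrt (2 * pi * \<sigma>\<^sup>2)"
  proof -
    have "(2 * \<sigma>)\<^sup>2 \<le> 2 * pi * \<sigma>\<^sup>2" using pi_gt3 s by (simp add: power2_eq_square)
    then show ?thesis by (meson real_le_rsqrt)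
  qed
  have p: "0 < sqrt (2 * pi * \<sigma>\<^sup>2)" using s by simp
  have "normal_density 0 \<sigma> t \<le> 1 / sqrt (2 * pi * \<sigma>\<^sup>2) * 1"
    unfolding normal_density_def by (rule mult_left_mono[OF e]) (use p in simp)
  also have "\<dots> \<le> 1 / (2 * \<sigma>)" using q s by (simp add: frac_le)
  finally show ?thesis .
qed

lemma ind_bound:
  assumes s: "0 < \<sigma>" and r: "0 \<le> r"
  shows "integrable lborel (\<lambda>t. normal_density 0 \<sigma> t * indicator {-r<..<r} t)"
    and "(\<integral>t. normal_density 0 \<sigma> t * indicator {-r<..<r} t \<partial>lborel) \<le> r / \<sigma>"
proof -
  show i: "integrable lborel (\<lambda>t. normal_density 0 \<sigma> t * indicator {-r<..<r} t)"
  proof -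
    have "integrable lborel (normal_density 0 \<sigma>)"
      using s by (simp add: integrable_normal_density)
    then show ?thesis using integrable_real_mult_indicator[of "{-r<..<r}" lborel "normal_density 0 \<sigma>"] by simp
  qed
  have i2: "integrable lborel (\<lambda>t. 1 / (2 * \<sigma>) * indicator {-r<..<r} t)"
    using r by (intro integrable_mult_right integrable_real_indicator) (auto simp: emeasure_lborel_Ioo)
  have "(\<integral>t. normal_density 0 \<sigma> t * indicator {-r<..<r} t \<partial>lborel)
      \<le> (\<integral>t. 1 / (2 * \<sigma>) * indicator {-r<..<r} t \<partial>lborel)"
    by (intro integral_mono i i2) (auto simp: indicator_def nd_le[OF s])
  also have "\<dots> = 1 / (2 * \<sigma>) * (2 * r)" using r by simp
  also have "\<dots> = r / \<sigma>" using s by simp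
  finally show "(\<integral>t. normal_density 0 \<sigma> t * indicator {-r<..<r} t \<partial>lborel) \<le> r / \<sigma>" .
qed

lemma meas_ip[measurable]: "(\<lambda>x. ip d x v) \<in> borel_measurable (gauss_vec d)"
  unfolding ip_def by (intro borel_measurable_sum borel_measurable_times meas_coord) auto

lemma P_lin:
  assumes s: "0 < enorm d v" and r: "0 \<le> r"
  shows "integrable (gauss_vec d) (\<lambda>x. indicator {-r<..<r} (ip d x v) :: real)"
    and "(\<integral>x. indicator {-r<..<r} (ip d x v) \<partial>gauss_vec d) \<le> r / enorm d v"
proof -
  note D = lin_distr[OF s]
  have g: "(indicator {-r<..<r} :: real \<Rightarrow> real) \<in> borel_measurable lborel" by simp
  show "integrable (gauss_vec d) (\<lambda>x. indicator {-r<..<r} (ip d x v) :: real)"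
    using distributed_integrable[OF D g] ind_bound[OF s r] normal_density_nonneg by auto
  show "(\<integral>x. indicator {-r<..<r} (ip d x v) \<partial>gauss_vec d) \<le> r / enorm d v"
    using distributed_integral[OF D g] ind_bound[OF s r] normal_density_nonneg by auto
qed

lemma enorm0: "enorm d v = 0 \<Longrightarrow> ip d x v = 0"
proof -
  assume "enorm d v = 0"
  then have "(\<Sum>i<d. (v i)\<^sup>2) = 0" unfolding enorm_def by simp
  then have "\<forall>i\<in>{..<d}. (v i)\<^sup>2 = 0" by (subst (asm) sum_nonneg_eq_0_iff) auto
  then show ?thesis unfolding ip_def by simp
qed

lemma M4_lin:
  shows "integrable (gauss_vec d) (\<lambda>x. (ip d x v)^4)"
    and "(\<integral>x. (ip d x v)^4 \<partial>gauss_vec d) \<le> 3 * (enorm d v)^4"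
proof -
  have "integrable (gauss_vec d) (\<lambda>x. (ip d x v)^4) \<and> (\<integral>x. (ip d x v)^4 \<partial>gauss_vec d) \<le> 3 * (enorm d v)^4"
  proof (cases "enorm d v = 0")
    case True
    then show ?thesis by (simp add: enorm0)
  next
    case False
    have "0 \<le> enorm d v" unfolding enorm_def by (simp add: sum_nonneg)
    then have s: "0 < enorm d v" using False by simp
    note D = lin_distr[OF s]
    have g: "(\<lambda>t::real. t^4) \<in> borel_measurable lborel" by simp
    have hb: "has_bochner_integral lborel (\<lambda>t. normal_density 0 (enorm d v) t * t^4) (3 * (enorm d v)^4)"
    proof -
      have eq: "fact (2*2) / ((2 / (enorm d v)\<^sup>2)^2 * fact 2) = 3 * (enorm d v)^4"
        using s by (simp add: fact_numeral field_simps power2_eq_square power4_eq_xxxx)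
      have h: "has_bochner_integral lborel (\<lambda>x. normal_density 0 (enorm d v) x * (x - 0)^(2*2))
          (fact (2*2) / ((2 / (enorm d v)\<^sup>2)^2 * fact 2))" by (rule normal_moment_even) (rule s)
      have f: "(\<lambda>x. normal_density 0 (enorm d v) x * (x - 0)^(2*2)) = (\<lambda>t. normal_density 0 (enorm d v) t * t^4)"
        by simp
      from h show ?thesis by (simp only: f eq)
    qed
    have i1: "integrable lborel (\<lambda>t. normal_density 0 (enorm d v) t * t^4)"
      using hb by (rule integrable.intros)
    have i2: "integral\<^sup>L lborel (\<lambda>t. normal_density 0 (enorm d v) t * t^4) = 3 * (enorm d v)^4"
      using hb by (rule has_bochner_integral_integral_eq)
    have nn: "\<And>x. 0 \<le> normal_density 0 (enorm d v) x" by (rule normal_density_nonneg)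
    show ?thesis
      using distributed_integrable[OF D g nn] distributed_integral[OF D g nn] i1 i2 by simp
  qed
  then show "integrable (gauss_vec d) (\<lambda>x. (ip d x v)^4)"
    and "(\<integral>x. (ip d x v)^4 \<partial>gauss_vec d) \<le> 3 * (enorm d v)^4" by auto
qed

lemma e_moments:
  shows "integrable gauss1 (\<lambda>x. x^2)" "(\<integral>x. x^2 \<partial>gauss1) = 1"
    "integrable gauss1 (\<lambda>x. x^4)" "(\<integral>x. x^4 \<partial>gauss1) = 3"
proof -
  have h2: "has_bochner_integral lborel (\<lambda>t. std_normal_density t * t^2) 1"
    using std_normal_moment_even[of 1] by simp
  have h4: "has_bochner_integral lborel (\<lambda>t. std_normal_density t * t^4) 3"
    using std_normal_moment_even[of 2] by (simp add: fact_numeral)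
  show "integrable gauss1 (\<lambda>x. x^2)" "(\<integral>x. x^2 \<partial>gauss1) = 1"
    "integrable gauss1 (\<lambda>x. x^4)" "(\<integral>x. x^4 \<partial>gauss1) = 3"
    using h2 h4 integrable.intros[OF h2] integrable.intros[OF h4] unfolding gauss1_def
    by (auto simp: integrable_real_density integral_real_density normal_density_nonneg
         dest: has_bochner_integral_integrable has_bochner_integral_integral_eq)
qed



lemma cosh_ge: "1 + \<bar>t::real\<bar> \<le> exp t + exp (- t)"
proof (cases "t \<ge> 0")
  case True
  then show ?thesis using exp_ge_add_one_self[of t] by (simp add: add_increasing2)
next
  case False
  then show ?thesis using exp_ge_add_one_self[of "-t"] by (simp add: add_increasing)
qed

lemma den_ge: "(1 + \<bar>t::real\<bar>)^4 \<le> (exp t + exp (- t))^4"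
  by (rule power_mono[OF cosh_ge]) simp

lemma F1_pw:
  fixes y a z e b c :: real
  assumes c: "1 \<le> c" and b: "b \<in> {-1, 1}" and y: "y = b * z + e"
  shows "y\<^sup>2 * a\<^sup>2 / (exp (y * a) + exp (- (y * a)))^4
     \<le> indicator {-c<..<c} a + indicator {-(2*c)<..<2*c} z + e\<^sup>2 / c\<^sup>2 + 1 / c^4"
proof -
  define w where "w = y * a"
  have qpos: "0 < (1 + \<bar>w\<bar>)^4" by simp
  have "y\<^sup>2 * a\<^sup>2 / (exp (y * a) + exp (- (y * a)))^4 = w\<^sup>2 / (exp w + exp (- w))^4"
    by (simp add: w_def power_mult_distrib)
  also have "\<dots> \<le> w\<^sup>2 / (1 + \<bar>w\<bar>)^4"
    by (rule frac_le) (use qpos den_ge in auto)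
  finally have F: "y\<^sup>2 * a\<^sup>2 / (exp (y * a) + exp (- (y * a)))^4 \<le> w\<^sup>2 / (1 + \<bar>w\<bar>)^4" .
  have nn: "0 \<le> indicator {-c<..<c} a + indicator {-(2*c)<..<2*c} z + e\<^sup>2 / c\<^sup>2"
    by (simp add: add_nonneg_nonneg)
  show ?thesis
  proof (cases "\<bar>w\<bar> < c\<^sup>2")
    case False
    then have wc: "c\<^sup>2 \<le> \<bar>w\<bar>" by simp
    have c2: "0 < c\<^sup>2" using c by simp
    have "w\<^sup>2 * c^4 \<le> (1 + \<bar>w\<bar>)^4"
    proof -
      have "w\<^sup>2 * c^4 = \<bar>w\<bar>^2 * (c\<^sup>2)^2" by (simp add: power_even_abs)
      also have "\<dots> \<le> \<bar>w\<bar>^2 * \<bar>w\<bar>^2" by (intro mult_left_mono power_mono wc) (use c2 in auto)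
      also have "\<dots> \<le> (1 + \<bar>w\<bar>)^2 * (1 + \<bar>w\<bar>)^2" by (intro mult_mono power_mono) auto
      also have "\<dots> = (1 + \<bar>w\<bar>)^4" by (simp add: power2_eq_square power4_eq_xxxx)
      finally show ?thesis .
    qed
    then have "w\<^sup>2 / (1 + \<bar>w\<bar>)^4 \<le> 1 / c^4"
      using c qpos by (simp add: divide_simps)
    then show ?thesis using F nn by linarith
  next
    case True
    have "w\<^sup>2 \<le> (1 + \<bar>w\<bar>)^4"
    proof -
      have "w\<^sup>2 = \<bar>w\<bar>^2 * 1" by simp
      also have "\<dots> \<le> (1 + \<bar>w\<bar>)^2 * (1 + \<bar>w\<bar>)^2" by (intro mult_mono power_mono) (auto simp: power2_eq_square, smt (verit) abs_ge_zero mult_ge1_I)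
      also have "\<dots> = (1 + \<bar>w\<bar>)^4" by (simp add: power2_eq_square power4_eq_xxxx)
      finally show ?thesis .
    qed
    then have F1: "w\<^sup>2 / (1 + \<bar>w\<bar>)^4 \<le> 1" using qpos by simp
    have "1 \<le> indicator {-c<..<c} a + indicator {-(2*c)<..<2*c} z + e\<^sup>2 / c\<^sup>2"
    proof -
      have "\<bar>a\<bar> < c \<or> \<bar>y\<bar> < c"
      proof (rule ccontr)
        assume "\<not> (\<bar>a\<bar> < c \<or> \<bar>y\<bar> < c)"
        then have "c * c \<le> \<bar>y\<bar> * \<bar>a\<bar>" using c by (intro mult_mono) auto
        then show False using True by (simp add: w_def abs_mult power2_eq_square)
      qed
      moreover have "\<bar>y\<bar> < c \<Longrightarrow> \<bar>z\<bar> < 2 * c \<or> c \<le> \<bar>e\<bar>"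
        using b y by auto
      moreover have "c \<le> \<bar>e\<bar> \<Longrightarrow> 1 \<le> e\<^sup>2 / c\<^sup>2"
      proof -
        assume "c \<le> \<bar>e\<bar>"
        then have "c\<^sup>2 \<le> \<bar>e\<bar>\<^sup>2" using c by (intro power_mono) auto
        then show ?thesis using c by simp
      qed
      ultimately show ?thesis
        by (auto simp: indicator_def abs_less_iff add_nonneg_nonneg)
    qed
    then show ?thesis using F F1 by (smt (verit) c divide_nonneg_nonneg zero_le_power)
  qed
qed



lemma sq_le4: fixes x c :: real assumes "0 < c" shows "x\<^sup>2 \<le> c\<^sup>2 + x^4 / c\<^sup>2"
proof -
  have h0: "0 \<le> (x\<^sup>2 - c\<^sup>2)\<^sup>2" by simp
  have e1: "(x\<^sup>2)\<^sup>2 = x^4" "(c\<^sup>2)\<^sup>2 = c\<^sup>2 * c\<^sup>2" by (simp_all add: power4_eq_xxxx power2_eq_square)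
  have A: "0 \<le> x\<^sup>2 * c\<^sup>2" by simp
  have "x\<^sup>2 * c\<^sup>2 \<le> c\<^sup>2 * c\<^sup>2 + x^4"
    using h0 A unfolding power2_diff e1 by linarith
  then show ?thesis using assms by (simp add: field_simps power2_eq_square)
qed

lemma sq_sum: fixes p q :: real shows "(p + q)\<^sup>2 \<le> 2 * p\<^sup>2 + 2 * q\<^sup>2"
proof -
  have "0 \<le> (p - q)\<^sup>2" by simp
  then show ?thesis unfolding power2_sum power2_diff by linarith
qed

lemma F2_pw:
  fixes y a z e b c dd u :: real
  assumes c: "1 \<le> c" and b: "b \<in> {-1, 1}" and y: "y = b * z + e" and z: "z = a - u * dd"
    and u: "0 \<le> u" "u \<le> 1"
  shows "y\<^sup>2 / (exp (y * a) + exp (- (y * a)))^4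
     \<le> 1 / c\<^sup>2 + 10 * c\<^sup>2 * indicator {-c<..<c} a + 4 * (dd^4 / c\<^sup>2) + 2 * (e^4 / c\<^sup>2)"
proof -
  define w where "w = y * a"
  have qpos: "0 < (1 + \<bar>w\<bar>)^4" by simp
  have F: "y\<^sup>2 / (exp (y * a) + exp (- (y * a)))^4 \<le> y\<^sup>2 / (1 + \<bar>w\<bar>)^4"
    unfolding w_def by (rule frac_le) (use qpos den_ge in \<open>auto simp: w_def\<close>)
  have cp: "0 < c" using c by simp
  have nn: "0 \<le> 10 * c\<^sup>2 * indicator {-c<..<c} a + 4 * (dd^4 / c\<^sup>2) + 2 * (e^4 / c\<^sup>2)"
    by (simp add: add_nonneg_nonneg)
  show ?thesis
  proof (cases "\<bar>a\<bar> < c")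
    case False
    have "y\<^sup>2 * c\<^sup>2 \<le> (1 + \<bar>w\<bar>)^4"
    proof -
      have "y\<^sup>2 * c\<^sup>2 = (\<bar>y\<bar> * c)^2" by (simp add: power_mult_distrib)
      also have "\<dots> \<le> \<bar>w\<bar>^2" unfolding w_def abs_mult
        by (intro power_mono mult_left_mono) (use False cp in auto)
      also have "\<dots> \<le> (1 + \<bar>w\<bar>)^2 * (1 + \<bar>w\<bar>)^2"
      proof -
        have h1: "\<bar>w\<bar>^2 \<le> (1 + \<bar>w\<bar>)^2" by (intro power_mono) auto
        have h2: "1 \<le> (1 + \<bar>w\<bar>)^2" by (intro one_le_power) auto
        have "\<bar>w\<bar>^2 * 1 \<le> (1 + \<bar>w\<bar>)^2 * (1 + \<bar>w\<bar>)^2" by (rule mult_mono[OF h1 h2]) auto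
        then show ?thesis by simp
      qed
      also have "\<dots> = (1 + \<bar>w\<bar>)^4" by (simp add: power2_eq_square power4_eq_xxxx)
      finally show ?thesis .
    qed
    then have "y\<^sup>2 / (1 + \<bar>w\<bar>)^4 \<le> 1 / c\<^sup>2"
      using cp qpos by (simp add: divide_simps)
    then show ?thesis using F nn by linarith
  next
    case True
    have "1 \<le> (1 + \<bar>w\<bar>)^4" by simp
    then have "y\<^sup>2 * 1 \<le> y\<^sup>2 * (1 + \<bar>w\<bar>)^4" by (intro mult_left_mono) auto
    then have F1: "y\<^sup>2 / (1 + \<bar>w\<bar>)^4 \<le> y\<^sup>2" using qpos by (simp add: divide_le_eq)
    have b2: "b\<^sup>2 = 1" using b by auto
    have y2: "y\<^sup>2 \<le> 2 * z\<^sup>2 + 2 * e\<^sup>2"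
    proof -
      have "y\<^sup>2 \<le> 2 * (b * z)\<^sup>2 + 2 * e\<^sup>2" unfolding y by (rule sq_sum)
      also have "(b * z)\<^sup>2 = z\<^sup>2" using b2 by (simp add: power_mult_distrib)
      finally show ?thesis .
    qed
    have ud: "(u * dd)\<^sup>2 \<le> dd\<^sup>2"
    proof -
      have "u\<^sup>2 \<le> 1" using u by (simp add: power_le_one)
      then have "u\<^sup>2 * dd\<^sup>2 \<le> 1 * dd\<^sup>2" by (intro mult_right_mono) auto
      then show ?thesis by (simp add: power_mult_distrib)
    qed
    have a2: "a\<^sup>2 \<le> c\<^sup>2"
    proof -
      have "\<bar>a\<bar>\<^sup>2 \<le> c\<^sup>2" using True by (intro power_mono) auto
      then show ?thesis by simp
    qed
    have z2: "z\<^sup>2 \<le> 2 * c\<^sup>2 + 2 * dd\<^sup>2"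
    proof -
      have "z\<^sup>2 \<le> 2 * a\<^sup>2 + 2 * (- (u * dd))\<^sup>2" unfolding z using sq_sum[of a "- (u * dd)"] by simp
      then have "z\<^sup>2 \<le> 2 * a\<^sup>2 + 2 * (u * dd)\<^sup>2" by simp
      then show ?thesis using ud a2 by linarith
    qed
    have d4: "dd\<^sup>2 \<le> c\<^sup>2 + dd^4 / c\<^sup>2" by (rule sq_le4[OF cp])
    have e4: "e\<^sup>2 \<le> c\<^sup>2 + e^4 / c\<^sup>2" by (rule sq_le4[OF cp])
    have "y\<^sup>2 \<le> 10 * c\<^sup>2 + 4 * (dd^4 / c\<^sup>2) + 2 * (e^4 / c\<^sup>2)"
      using y2 z2 d4 e4 by linarith
    moreover have "indicator {-c<..<c} a = (1::real)" using True by (simp add: abs_less_iff)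
    moreover have "0 \<le> 1 / c\<^sup>2" by simp
    ultimately show ?thesis using F F1 by (simp only:)
  qed
qed



lemma int_le_bound:
  fixes f g :: "'a \<Rightarrow> real"
  assumes "AE x in M. f x \<le> g x" "integrable M g" "integral\<^sup>L M g \<le> K" "0 \<le> K"
  shows "integral\<^sup>L M f \<le> K"
proof (cases "integrable M f")
  case True
  then show ?thesis using integral_mono_AE[OF True assms(2,1)] assms(3) by linarith
next
  case False
  then show ?thesis using assms(4) by (simp add: not_integrable_integral_eq)
qed

lemma enorm_L2: "enorm d x = L2_set x {..<d}"
  unfolding enorm_def L2_set_def by simp

lemma ip_lin: "ip d x (\<lambda>i. ths i + u * (th i - ths i)) = ip d x ths + u * ip d x (\<lambda>i. th i - ths i)"
  unfolding ip_def sum_distrib_left sum.distrib[symmetric] by (rule sum.cong) (auto simp: algebra_simps)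

lemma enorm_thu:
  assumes u: "0 \<le> u" "u \<le> 1"
  shows "enorm d ths \<le> enorm d (\<lambda>i. ths i + u * (th i - ths i)) + enorm d (\<lambda>i. th i - ths i)"
proof -
  let ?t = "\<lambda>i. ths i + u * (th i - ths i)"
  let ?m = "\<lambda>i. - (u * (th i - ths i))"
  have "enorm d ths = L2_set (\<lambda>i. ?t i + ?m i) {..<d}" by (simp add: enorm_L2)
  also have "\<dots> \<le> L2_set ?t {..<d} + L2_set ?m {..<d}" by (rule L2_set_triangle_ineq)
  also have "L2_set ?m {..<d} = L2_set (\<lambda>i. u * (th i - ths i)) {..<d}"
    unfolding L2_set_def by simp
  also have "\<dots> = u * L2_set (\<lambda>i. th i - ths i) {..<d}"
    using L2_set_right_distrib[OF u(1), of "\<lambda>i. th i - ths i" "{..<d}"] by simp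
  also have "\<dots> \<le> 1 * L2_set (\<lambda>i. th i - ths i) {..<d}"
    using u by (intro mult_right_mono) auto
  finally show ?thesis by (simp add: enorm_L2)
qed



lemma IA:
  assumes "0 < enorm d v" "0 \<le> r"
  shows "integrable (mor_model d) (\<lambda>\<omega>. indicator {-r<..<r} (ip d (fst (fst \<omega>)) v) :: real)"
    and "(\<integral>\<omega>. indicator {-r<..<r} (ip d (fst (fst \<omega>)) v) \<partial>mor_model d) \<le> r / enorm d v"
proof -
  have m: "(\<lambda>x. indicator {-r<..<r} (ip d x v) :: real) \<in> borel_measurable (gauss_vec d)" by measurable
  show "integrable (mor_model d) (\<lambda>\<omega>. indicator {-r<..<r} (ip d (fst (fst \<omega>)) v) :: real)"
    using int_MX(2)[OF m] P_lin(1)[OF assms] by simp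
  show "(\<integral>\<omega>. indicator {-r<..<r} (ip d (fst (fst \<omega>)) v) \<partial>mor_model d) \<le> r / enorm d v"
    using int_MX(1)[OF m] P_lin(2)[OF assms] by simp
qed

lemma I4:
  shows "integrable (mor_model d) (\<lambda>\<omega>. (ip d (fst (fst \<omega>)) v)^4)"
    and "(\<integral>\<omega>. (ip d (fst (fst \<omega>)) v)^4 \<partial>mor_model d) \<le> 3 * (enorm d v)^4"
proof -
  have m: "(\<lambda>x. (ip d x v)^4) \<in> borel_measurable (gauss_vec d)" by measurable
  show "integrable (mor_model d) (\<lambda>\<omega>. (ip d (fst (fst \<omega>)) v)^4)"
    using int_MX(2)[OF m] M4_lin(1) by simp
  show "(\<integral>\<omega>. (ip d (fst (fst \<omega>)) v)^4 \<partial>mor_model d) \<le> 3 * (enorm d v)^4"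
    using int_MX(1)[OF m] M4_lin(2) by simp
qed

lemma Ie:
  shows "integrable (mor_model d) (\<lambda>\<omega>. (snd (fst \<omega>))^2)"
    "(\<integral>\<omega>. (snd (fst \<omega>))^2 \<partial>mor_model d) = 1"
    "integrable (mor_model d) (\<lambda>\<omega>. (snd (fst \<omega>))^4)"
    "(\<integral>\<omega>. (snd (fst \<omega>))^4 \<partial>mor_model d) = 3"
proof -
  have m2: "(\<lambda>x::real. x^2) \<in> borel_measurable borel" by measurable
  have m4: "(\<lambda>x::real. x^4) \<in> borel_measurable borel" by measurable
  show "integrable (mor_model d) (\<lambda>\<omega>. (snd (fst \<omega>))^2)"
    "(\<integral>\<omega>. (snd (fst \<omega>))^2 \<partial>mor_model d) = 1"
    "integrable (mor_model d) (\<lambda>\<omega>. (snd (fst \<omega>))^4)"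
    "(\<integral>\<omega>. (snd (fst \<omega>))^4 \<partial>mor_model d) = 3"
    using int_Me[OF m2] int_Me[OF m4] e_moments by simp_all
qed

lemma int_const_M: "(\<integral>\<omega>. (k::real) \<partial>mor_model d) = k"
  using prob_space.prob_space[OF ps_M] by simp

lemma int_const_M': "integrable (mor_model d) (\<lambda>\<omega>. (k::real))"
  using prob_space.finite_measure[OF ps_M] by (simp add: finite_measure.integrable_const)



lemma resp_eq: "resp d ths \<omega> = snd \<omega> * ip d (fst (fst \<omega>)) ths + snd (fst \<omega>)"
  by (cases \<omega>) (auto simp: resp_def)

lemma sigA:
  assumes s: "10000000000000000 \<le> enorm d ths" and dl: "enorm d (\<lambda>i. th i - ths i) \<le> enorm d ths / 32"
    and u: "0 \<le> u" "u \<le> 1"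
  shows "enorm d ths / 2 \<le> enorm d (\<lambda>i. ths i + u * (th i - ths i))"
  using enorm_thu[OF u, of d ths th] s dl by linarith

lemma small_frac:
  fixes r N :: real
  assumes "0 < r" "r * 1000000000000 \<le> N"
  shows "r / N \<le> 1 / 1000000000000"
proof -
  have "0 < N" using assms by (smt (verit) mult_pos_pos zero_less_power)
  then show ?thesis using assms by (simp add: divide_simps)
qed

lemma part1:
  assumes s: "10000000000000000 \<le> enorm d ths" and dl: "enorm d (\<lambda>i. th i - ths i) \<le> enorm d ths / 32"
    and u: "0 \<le> u" "u \<le> 1"
  shows "(\<integral>\<omega>. (resp d ths \<omega>)\<^sup>2 * (ip d (fst (fst \<omega>)) (\<lambda>i. ths i + u * (th i - ths i)))\<^sup>2
           / (exp (resp d ths \<omega> * ip d (fst (fst \<omega>)) (\<lambda>i. ths i + u * (th i - ths i)))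
              + exp (- (resp d ths \<omega> * ip d (fst (fst \<omega>)) (\<lambda>i. ths i + u * (th i - ths i)))))^4
         \<partial>mor_model d) \<le> 1 / 10000"
proof -
  define c :: real where "c = 1000"
  define thu where "thu = (\<lambda>i. ths i + u * (th i - ths i))"
  define sA where "sA = enorm d thu"
  define s0 where "s0 = enorm d ths"
  have sA: "s0 / 2 \<le> sA" unfolding sA_def s0_def thu_def by (rule sigA[OF s dl u])
  have s0: "10000000000000000 \<le> s0" using s by (simp add: s0_def)
  have sApos: "0 < sA" using sA s0 by linarith
  have s0pos: "0 < s0" using s0 by linarith
  have c1: "1 \<le> c" by (simp add: c_def)
  define g where "g = (\<lambda>\<omega>::((nat \<Rightarrow> real) \<times> real) \<times> real. indicator {-c<..<c} (ip d (fst (fst \<omega>)) thu)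
       + indicator {-(2*c)<..<2*c} (ip d (fst (fst \<omega>)) ths) + (snd (fst \<omega>))\<^sup>2 / c\<^sup>2 + 1 / c^4 :: real)"
  have ae: "AE \<omega> in mor_model d. (resp d ths \<omega>)\<^sup>2 * (ip d (fst (fst \<omega>)) thu)\<^sup>2
           / (exp (resp d ths \<omega> * ip d (fst (fst \<omega>)) thu)
              + exp (- (resp d ths \<omega> * ip d (fst (fst \<omega>)) thu)))^4 \<le> g \<omega>"
    using AE_B
  proof eventually_elim
    case (elim \<omega>)
    show ?case unfolding g_def
      by (rule F1_pw[OF c1 elim resp_eq])
  qed
  have iA: "integrable (mor_model d) (\<lambda>\<omega>. indicator {-c<..<c} (ip d (fst (fst \<omega>)) thu) :: real)"
    and bA: "(\<integral>\<omega>. indicator {-c<..<c} (ip d (fst (fst \<omega>)) thu) \<partial>mor_model d) \<le> c / sA"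
    using IA[of d thu c] sApos by (auto simp: sA_def c_def)
  have iZ: "integrable (mor_model d) (\<lambda>\<omega>. indicator {-(2*c)<..<2*c} (ip d (fst (fst \<omega>)) ths) :: real)"
    and bZ: "(\<integral>\<omega>. indicator {-(2*c)<..<2*c} (ip d (fst (fst \<omega>)) ths) \<partial>mor_model d) \<le> 2 * c / s0"
    using IA[of d ths "2*c"] s0pos by (auto simp: s0_def c_def)
  have ie: "integrable (mor_model d) (\<lambda>\<omega>. (snd (fst \<omega>))\<^sup>2 / c\<^sup>2)"
    using Ie(1) by simp
  have ig: "integrable (mor_model d) g"
    unfolding g_def using Bochner_Integration.integrable_add[OF Bochner_Integration.integrable_add[OF Bochner_Integration.integrable_add[OF iA iZ] ie] int_const_M'] by simp
  have intg: "integral\<^sup>L (mor_model d) g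
     = (\<integral>\<omega>. indicator {-c<..<c} (ip d (fst (fst \<omega>)) thu) \<partial>mor_model d)
     + (\<integral>\<omega>. indicator {-(2*c)<..<2*c} (ip d (fst (fst \<omega>)) ths) \<partial>mor_model d)
     + 1 / c\<^sup>2 + 1 / c^4"
    unfolding g_def using iA iZ ie Ie(2) int_const_M' prob_space.prob_space[OF ps_M]
    by (simp add: int_const_M)
  have f1: "c / sA \<le> 1 / 1000000000000"
    by (rule small_frac) (use sA s0 in \<open>auto simp: c_def\<close>)
  have f2: "2 * c / s0 \<le> 1 / 1000000000000"
    by (rule small_frac) (use s0 in \<open>auto simp: c_def\<close>)
  have "integral\<^sup>L (mor_model d) g \<le> 1 / 10000"
    using intg bA bZ f1 f2 by (simp add: c_def)
  from int_le_bound[OF ae ig this] show ?thesis by (simp add: thu_def)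
qed



lemma part2:
  assumes s: "10000000000000000 \<le> enorm d ths" and dl: "enorm d (\<lambda>i. th i - ths i) \<le> enorm d ths / 32"
    and d1: "enorm d (\<lambda>i. th i - ths i) \<le> 1"
    and u: "0 \<le> u" "u \<le> 1"
  shows "(\<integral>\<omega>. (resp d ths \<omega>)\<^sup>2
           / (exp (resp d ths \<omega> * ip d (fst (fst \<omega>)) (\<lambda>i. ths i + u * (th i - ths i)))
              + exp (- (resp d ths \<omega> * ip d (fst (fst \<omega>)) (\<lambda>i. ths i + u * (th i - ths i)))))^4
         \<partial>mor_model d) \<le> 1 / 25600"
proof -
  define c :: real where "c = 1000"
  define thu where "thu = (\<lambda>i. ths i + u * (th i - ths i))"
  define dl' where "dl' = (\<lambda>i. th i - ths i)"
  define sA where "sA = enorm d thu"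
  define s0 where "s0 = enorm d ths"
  have sA: "s0 / 2 \<le> sA" unfolding sA_def s0_def thu_def by (rule sigA[OF s dl u])
  have s0: "10000000000000000 \<le> s0" using s by (simp add: s0_def)
  have sApos: "0 < sA" using sA s0 by linarith
  have c1: "1 \<le> c" by (simp add: c_def)
  define g where "g = (\<lambda>\<omega>::((nat \<Rightarrow> real) \<times> real) \<times> real. 1 / c\<^sup>2
       + 10 * c\<^sup>2 * indicator {-c<..<c} (ip d (fst (fst \<omega>)) thu)
       + 4 * ((ip d (fst (fst \<omega>)) dl')^4 / c\<^sup>2) + 2 * ((snd (fst \<omega>))^4 / c\<^sup>2) :: real)"
  have zl: "\<And>x. ip d x ths = ip d x thu - u * ip d x dl'"
    unfolding thu_def dl'_def ip_lin by simp
  have ae: "AE \<omega> in mor_model d. (resp d ths \<omega>)\<^sup>2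
           / (exp (resp d ths \<omega> * ip d (fst (fst \<omega>)) thu)
              + exp (- (resp d ths \<omega> * ip d (fst (fst \<omega>)) thu)))^4 \<le> g \<omega>"
    using AE_B
  proof eventually_elim
    case (elim \<omega>)
    show ?case unfolding g_def
      by (rule F2_pw[OF c1 elim resp_eq zl u])
  qed
  have iA: "integrable (mor_model d) (\<lambda>\<omega>. indicator {-c<..<c} (ip d (fst (fst \<omega>)) thu) :: real)"
    and bA: "(\<integral>\<omega>. indicator {-c<..<c} (ip d (fst (fst \<omega>)) thu) \<partial>mor_model d) \<le> c / sA"
    using IA[of d thu c] sApos by (auto simp: sA_def c_def)
  have iD: "integrable (mor_model d) (\<lambda>\<omega>. (ip d (fst (fst \<omega>)) dl')^4)"
    and bD: "(\<integral>\<omega>. (ip d (fst (fst \<omega>)) dl')^4 \<partial>mor_model d) \<le> 3 * (enorm d dl')^4"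
    using I4 by auto
  have dl4: "(enorm d dl')^4 \<le> 1"
    using d1 by (intro power_le_one) (auto simp: dl'_def enorm_def sum_nonneg)
  have i1: "integrable (mor_model d) (\<lambda>\<omega>. 10 * c\<^sup>2 * indicator {-c<..<c} (ip d (fst (fst \<omega>)) thu) :: real)"
    using iA by simp
  have i2: "integrable (mor_model d) (\<lambda>\<omega>. 4 * ((ip d (fst (fst \<omega>)) dl')^4 / c\<^sup>2))"
    using iD by simp
  have i3: "integrable (mor_model d) (\<lambda>\<omega>. 2 * ((snd (fst \<omega>))^4 / c\<^sup>2))"
    using Ie(3) by simp
  have ig: "integrable (mor_model d) g"
    unfolding g_def using Bochner_Integration.integrable_add[OF Bochner_Integration.integrable_add[OF
       Bochner_Integration.integrable_add[OF int_const_M' i1] i2] i3] by simp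
  have intg: "integral\<^sup>L (mor_model d) g
     = 1 / c\<^sup>2 + 10 * c\<^sup>2 * (\<integral>\<omega>. indicator {-c<..<c} (ip d (fst (fst \<omega>)) thu) \<partial>mor_model d)
     + 4 * ((\<integral>\<omega>. (ip d (fst (fst \<omega>)) dl')^4 \<partial>mor_model d) / c\<^sup>2) + 2 * (3 / c\<^sup>2)"
    unfolding g_def using i1 i2 i3 iA iD Ie(3,4) int_const_M' prob_space.prob_space[OF ps_M]
    by (simp add: int_const_M)
  have f1: "c / sA \<le> 1 / 1000000000000"
    by (rule small_frac) (use sA s0 in \<open>auto simp: c_def\<close>)
  have "10 * c\<^sup>2 * (\<integral>\<omega>. indicator {-c<..<c} (ip d (fst (fst \<omega>)) thu) \<partial>mor_model d) \<le> 10 * c\<^sup>2 * (c / sA)"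
    using bA by (intro mult_left_mono) auto
  moreover have "(\<integral>\<omega>. (ip d (fst (fst \<omega>)) dl')^4 \<partial>mor_model d) \<le> 3" using bD dl4 by linarith
  ultimately have "integral\<^sup>L (mor_model d) g \<le> 1 / 25600"
    using intg f1 by (simp add: c_def)
  from int_le_bound[OF ae ig this] show ?thesis by (simp add: thu_def)
qed


lemma sqrt_bound: "x \<le> a\<^sup>2 \<Longrightarrow> 0 \<le> a \<Longrightarrow> a \<le> b \<Longrightarrow> sqrt x \<le> (b::real)"
  by (smt (verit) real_sqrt_abs real_sqrt_le_mono)

theorem lemma6:
  shows "\<exists>\<eta>0 > (0::real). \<exists>\<gamma>::real. 0 \<le> \<gamma> \<and> \<gamma> < 1/4 \<and>
    (\<forall>(d::nat) (ths::nat \<Rightarrow> real) (th::nat \<Rightarrow> real) (u::real).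
       enorm d ths \<ge> \<eta>0 \<longrightarrow>
       enorm d (\<lambda>i. th i - ths i) \<le> enorm d ths / 32 \<longrightarrow>
       0 \<le> u \<longrightarrow> u \<le> 1 \<longrightarrow>
       (let thu = (\<lambda>i. ths i + u * (th i - ths i));
            W = (\<lambda>\<omega>. resp d ths \<omega> * ip d (fst (fst \<omega>)) thu)
        in sqrt (\<integral>\<omega>. (resp d ths \<omega>)\<^sup>2 * (ip d (fst (fst \<omega>)) thu)\<^sup>2
                        / (exp (W \<omega>) + exp (- W \<omega>)) ^ 4 \<partial>mor_model d) \<le> \<gamma> / 14
           \<and> (enorm d (\<lambda>i. th i - ths i) \<le> 1 \<longrightarrow>
                sqrt (\<integral>\<omega>. (resp d ths \<omega>)\<^sup>2 / (exp (W \<omega>) + exp (- W \<omega>)) ^ 4 \<partial>mor_model d)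
                  \<le> \<gamma> / 32)))"
proof (rule exI[of _ "10000000000000000"], rule conjI, simp, rule exI[of _ "1/5"], intro conjI allI impI)
  fix d :: nat and ths th :: "nat \<Rightarrow> real" and u :: real
  assume s: "(10000000000000000::real) \<le> enorm d ths"
    and dl: "enorm d (\<lambda>i. th i - ths i) \<le> enorm d ths / 32" and u: "0 \<le> u" "u \<le> 1"
  show "let thu = (\<lambda>i. ths i + u * (th i - ths i));
            W = (\<lambda>\<omega>. resp d ths \<omega> * ip d (fst (fst \<omega>)) thu)
        in sqrt (\<integral>\<omega>. (resp d ths \<omega>)\<^sup>2 * (ip d (fst (fst \<omega>)) thu)\<^sup>2
                        / (exp (W \<omega>) + exp (- W \<omega>)) ^ 4 \<partial>mor_model d) \<le> (1/5) / 14
           \<and> (enorm d (\<lambda>i. th i - ths i) \<le> 1 \<longrightarrow>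
                sqrt (\<integral>\<omega>. (resp d ths \<omega>)\<^sup>2 / (exp (W \<omega>) + exp (- W \<omega>)) ^ 4 \<partial>mor_model d)
                  \<le> (1/5) / 32)"
    unfolding Let_def
  proof (intro conjI impI)
    show "sqrt (\<integral>\<omega>. (resp d ths \<omega>)\<^sup>2 * (ip d (fst (fst \<omega>)) (\<lambda>i. ths i + u * (th i - ths i)))\<^sup>2
           / (exp (resp d ths \<omega> * ip d (fst (fst \<omega>)) (\<lambda>i. ths i + u * (th i - ths i)))
              + exp (- (resp d ths \<omega> * ip d (fst (fst \<omega>)) (\<lambda>i. ths i + u * (th i - ths i)))))^4
         \<partial>mor_model d) \<le> (1/5) / 14"
      by (rule sqrt_bound[of _ "1/100"]) (use part1[OF s dl u] in \<open>simp_all add: power2_eq_square\<close>)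
  next
    assume d1: "enorm d (\<lambda>i. th i - ths i) \<le> 1"
    show "sqrt (\<integral>\<omega>. (resp d ths \<omega>)\<^sup>2
           / (exp (resp d ths \<omega> * ip d (fst (fst \<omega>)) (\<lambda>i. ths i + u * (th i - ths i)))
              + exp (- (resp d ths \<omega> * ip d (fst (fst \<omega>)) (\<lambda>i. ths i + u * (th i - ths i)))))^4
         \<partial>mor_model d) \<le> (1/5) / 32"
      by (rule sqrt_bound[of _ "1/160"]) (use part2[OF s dl d1 u] in \<open>simp_all add: power2_eq_square\<close>)
  qed
qed (simp_all)

end
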